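(* Let $G$ be an abelian Hausdorff topological group and $A\subseteq G$ with $0\notin A$. The following are equivalent: (i) $A$ is absolutely summable in $G$; (ii) the Kalton map $K_A:S_A\to G$ is continuous and its continuous extension $\overline{K_A}:P_A\to\overline{G}$ satisfies $\overline{K_A}(P_A)\subseteq G$. Furthermore, if these equivalent conditions hold, then $\overline{K_A}(h)=\sum_{a\in A}K_A(h_a)$ for every $h=\{h_a\}_{a\in A}\in P_A$ (the sum taken in the sense of summability of the indexed family $\{K_A(h_a)\}_{a\in A}$ in $G$).
   Context: $\overline{H}$ denotes the completion of a topological group $H$. For $a\in G$, $\langle a\rangle$ is the cyclic subgroup generated by $a$ with the subspace topology. $P_A=\prod_{a\in A}\langle a\rangle$ has the Tychonoff product topology and $S_A=\bigoplus_{a\in A}\langle a\rangle\subseteq P_A$ the subspace topology; the summand $\langle a\rangle$ of $S_A$ is identified with the corresponding coordinate subgroup. The Kalton map $K_A:S_A\to G$ is the unique homomorphism extending each inclusion $\langle a\rangle\to G$. When $K_A$ is continuous it extends uniquely to a continuous homomorphism $\overline{S_A}\to\overline{G}$; as $\overline{S_A}=\prod_{a\in A}\overline{\langle a\rangle}\supseteq P_A$, its restriction to $P_A$ is denoted $\overline{K_A}$. An indexed family $\{x_a:a\in A\}$ has sum $g=\sum_{a\in A}x_a$ if for every neighbourhood $U$ of $0$ there is a finite $F\subseteq A$ with $g-\sum_{a\in E}x_a\in U$ for every finite $E\subseteq A$ containing $F$. $A$ is absolutely summable if for every family $\{z_a:a\in A\}$ of integers the family $\{z_aa:a\in A\}$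 has a sum in $G$. *)

theory Defs
  imports "HOL-Analysis.Analysis"
begin

definition zsmult :: "int \<Rightarrow> 'a::ab_group_add \<Rightarrow> 'a" where
  "zsmult n a = (if 0 \<le> n then (\<Sum>_<nat n. a) else - (\<Sum>_<nat (-n). a))"

definition cyc :: "'a::ab_group_add \<Rightarrow> 'a set" where
  "cyc a = range (\<lambda>n::int. zsmult n a)"

definition PA :: "'a::{topological_ab_group_add} set \<Rightarrow> ('a \<Rightarrow> 'a) topology" where
  "PA A = product_topology (\<lambda>a. subtopology euclidean (cyc a)) A"

definition SA :: "'a::{topological_ab_group_add} set \<Rightarrow> ('a \<Rightarrow> 'a) set" where
  "SA A = {h \<in> topspace (PA A). finite {a \<in> A. h a \<noteq> 0}}"

definition kalton :: "'a::ab_group_add set \<Rightarrow> ('a \<Rightarrow> 'a) \<Rightarrow> 'a" where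
  "kalton A h = (\<Sum>a\<in>{a \<in> A. h a \<noteq> 0}. h a)"

definition coord :: "'a::ab_group_add set \<Rightarrow> 'a \<Rightarrow> 'a \<Rightarrow> ('a \<Rightarrow> 'a)" where
  "coord A a x = (\<lambda>b. if b \<in> A then (if b = a then x else 0) else undefined)"

definition abs_summable :: "'a::{topological_ab_group_add} set \<Rightarrow> bool" where
  "abs_summable A \<longleftrightarrow> (\<forall>z::'a \<Rightarrow> int. \<exists>g. ((\<lambda>a. zsmult (z a) a) has_sum g) A)"

definition group_cauchy :: "'a::topological_ab_group_add filter \<Rightarrow> bool" where
  "group_cauchy F \<longleftrightarrow>
     (\<forall>U. open U \<and> 0 \<in> U \<longrightarrow> (\<forall>\<^sub>F p in F \<times>\<^sub>F F. fst p - snd p \<in> U))"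

definition complete_group :: "'a::topological_ab_group_add itself \<Rightarrow> bool" where
  "complete_group _ \<longleftrightarrow>
     (\<forall>F::'a filter. F \<noteq> bot \<and> group_cauchy F \<longrightarrow> (\<exists>x. F \<le> nhds x))"

text \<open>j : G \<rightarrow> H is a completion of G: H is a complete Hausdorff abelian group
  (Hausdorff via the type class), j is an injective continuous homomorphism that is a
  topological embedding, and j(G) is dense in H.\<close>
definition is_completion ::
  "('a::topological_ab_group_add \<Rightarrow> 'b::{topological_ab_group_add,t2_space}) \<Rightarrow> bool" where
  "is_completion j \<longleftrightarrow> complete_group TYPE('b) \<and> (\<forall>x y. j (x + y) = j x + j y) \<and> inj j \<and>
     homeomorphic_map euclidean (subtopology euclidean (range j)) j \<and> closure (range j) = UNIV"

definition kalton_ext ::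
  "'a::topological_ab_group_add set \<Rightarrow> ('a \<Rightarrow> 'b::topological_ab_group_add) \<Rightarrow> (('a \<Rightarrow> 'a) \<Rightarrow> 'b) \<Rightarrow> bool" where
  "kalton_ext A j g \<longleftrightarrow> continuous_map (PA A) euclidean g \<and> (\<forall>h \<in> SA A. g h = j (kalton A h))"

end

theory Submission
  imports Defs
begin


lemma nbhd_add:
  fixes U :: "'a::topological_ab_group_add set"
  assumes "open U" "0 \<in> U"
  shows "\<exists>V. open V \<and> 0 \<in> V \<and> (\<forall>x\<in>V. \<forall>y\<in>V. x + y \<in> U)"
proof -
  have c: "continuous_on UNIV (\<lambda>p::'a\<times>'a. fst p + snd p)"
    by (intro continuous_intros)
  have "open ((\<lambda>p::'a\<times>'a. fst p + snd p) -` U)"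
    using open_vimage[OF assms(1) c] by simp
  moreover have "(0,0) \<in> (\<lambda>p::'a\<times>'a. fst p + snd p) -` U" using assms by simp
  ultimately obtain X Y where XY: "open X" "open Y" "(0,0) \<in> X \<times> Y"
     "X \<times> Y \<subseteq> (\<lambda>p::'a\<times>'a. fst p + snd p) -` U"
    by (rule open_prod_elim)
  show ?thesis
    apply (rule exI[of _ "X \<inter> Y"]) using XY by auto
qed

lemma open_neg:
  fixes S :: "'a::topological_ab_group_add set"
  assumes "open S" shows "open (uminus ` S)"
proof -
  have e: "uminus ` S = uminus -` S"
  proof
    show "uminus ` S \<subseteq> uminus -` S" by auto
    show "uminus -` S \<subseteq> uminus ` S"
    proof
      fix x assume "x \<in> uminus -` S"
      then have "- x \<in> S" by simp
      then have "- (- x) \<in> uminus ` S" by (rule imageI)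
      then show "x \<in> uminus ` S" by simp
    qed
  qed
  have c: "continuous_on UNIV (uminus :: 'a \<Rightarrow> 'a)" by (intro continuous_intros)
  show ?thesis unfolding e using open_vimage[OF assms c] by simp
qed

lemma nbhd3:
  fixes U :: "'a::topological_ab_group_add set"
  assumes "open U" "0 \<in> U"
  shows "\<exists>D. open D \<and> 0 \<in> D \<and> (\<forall>x\<in>D. \<forall>y\<in>D. \<forall>z\<in>D. x + y + - z \<in> U)"
proof -
  obtain V where V: "open V" "0 \<in> V" "\<forall>x\<in>V. \<forall>y\<in>V. x + y \<in> U"
    using nbhd_add[OF assms] by blast
  obtain V2 where V2: "open V2" "0 \<in> V2" "\<forall>x\<in>V2. \<forall>y\<in>V2. x + y \<in> V"
    using nbhd_add[OF V(1,2)] by blast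
  have "V2 \<subseteq> V"
  proof
    fix x assume "x \<in> V2"
    then have "x + 0 \<in> V" using V2 by blast
    then show "x \<in> V" by simp
  qed
  let ?D = "V2 \<inter> uminus ` V2"
  have "open ?D" using open_Int[OF V2(1) open_neg[OF V2(1)]] .
  moreover have "0 \<in> ?D" using V2(2) image_eqI[of 0 uminus 0 V2] by simp
  moreover have "\<forall>x\<in>?D. \<forall>y\<in>?D. \<forall>z\<in>?D. x + y + - z \<in> U"
  proof (intro ballI)
    fix x y z assume a: "x \<in> ?D" "y \<in> ?D" "z \<in> ?D"
    from a(3) obtain w where "w \<in> V2" "z = - w" by blast
    then have mz: "- z \<in> V2" by simp
    have "x \<in> V2" "y \<in> V2" using a by blast+
    then have "x + y \<in> V" using V2(3) by blast
    moreover have "- z \<in> V" using mz \<open>V2 \<subseteq> V\<close> by blast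
    ultimately show "x + y + - z \<in> U" using V(3) by blast
  qed
  ultimately show ?thesis by blast
qed

lemma closure_nbhd:
  fixes D :: "'a::topological_ab_group_add set"
  assumes "open D" "0 \<in> D"
  shows "\<exists>W. open W \<and> 0 \<in> W \<and> closure W \<subseteq> D"
proof -
  obtain V where V: "open V" "0 \<in> V" "\<forall>x\<in>V. \<forall>y\<in>V. x + y \<in> D"
    using nbhd_add[OF assms] by blast
  have "closure V \<subseteq> D"
  proof
    fix x assume x: "x \<in> closure V"
    have c: "continuous_on UNIV (\<lambda>v::'a. x - v)" by (intro continuous_intros)
    have o: "open ((\<lambda>v. x - v) -` V)" using open_vimage[OF V(1) c] by simp
    have "x \<in> (\<lambda>v. x - v) -` V" using V by simp
    then have "V \<inter> ((\<lambda>v. x - v) -` V) \<noteq> {}"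
      using closure_iff_nhds_not_empty[THEN iffD1, rule_format, OF x subset_refl o] by blast
    then obtain v where "v \<in> V" "x - v \<in> V" by blast
    then have "v + (x - v) \<in> D" using V by blast
    then show "x \<in> D" by simp
  qed
  then show ?thesis using V by blast
qed

lemma zero_cyc: "0 \<in> cyc a"
  unfolding cyc_def zsmult_def by (rule image_eqI[of _ _ 0]) auto

lemma abs_summable_summable:
  assumes "abs_summable A" "\<forall>a\<in>A. h a \<in> cyc a"
  shows "h summable_on A"
proof -
  have "\<forall>a\<in>A. \<exists>n. h a = zsmult n a" using assms(2) unfolding cyc_def by blast
  then obtain z where z: "\<forall>a\<in>A. h a = zsmult (z a) a" by metis
  obtain g where "((\<lambda>a. zsmult (z a) a) has_sum g) A"
    using assms(1) unfolding abs_summable_def by blast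
  then have "(h has_sum g) A" using z has_sum_cong by (metis (mono_tags, lifting))
  then show ?thesis unfolding summable_on_def by blast
qed

lemma cauchy_tail:
  fixes h :: "'b \<Rightarrow> 'a::topological_ab_group_add"
  assumes "h summable_on A" "open W" "0 \<in> W"
  shows "\<exists>F. finite F \<and> F \<subseteq> A \<and> (\<forall>E. finite E \<and> E \<subseteq> A - F \<longrightarrow> sum h E \<in> W)"
proof -
  obtain s where s: "(h has_sum s) A" using assms(1) unfolding summable_on_def by blast
  have wn: "open (uminus ` W)" "0 \<in> uminus ` W" using assms open_neg by (auto simp: image_iff)
  obtain V where V: "open V" "0 \<in> V" "\<forall>x\<in>V. \<forall>y\<in>V. x + y \<in> W"
    using nbhd_add[OF assms(2,3)] by blast
  let ?V = "V \<inter> uminus ` V"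
  have oV: "open ?V" "0 \<in> ?V" using V open_neg by (auto simp: image_iff)
  have "((\<lambda>E. sum h E - s) \<longlongrightarrow> s - s) (finite_subsets_at_top A)"
    using s unfolding has_sum_def by (intro tendsto_intros)
  then have t0: "((\<lambda>E. sum h E - s) \<longlongrightarrow> 0) (finite_subsets_at_top A)" by simp
  have "eventually (\<lambda>E. sum h E - s \<in> ?V) (finite_subsets_at_top A)"
    by (rule topological_tendstoD[OF t0 oV(1) oV(2)])
  then obtain F where F: "finite F" "F \<subseteq> A"
    "\<forall>Y. finite Y \<and> F \<subseteq> Y \<and> Y \<subseteq> A \<longrightarrow> sum h Y - s \<in> ?V"
    unfolding eventually_finite_subsets_at_top by blast
  have "\<forall>E. finite E \<and> E \<subseteq> A - F \<longrightarrow> sum h E \<in> W"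
  proof (intro allI impI)
    fix E assume E: "finite E \<and> E \<subseteq> A - F"
    have 1: "sum h (F \<union> E) - s \<in> ?V" using F E by auto
    have 2: "sum h F - s \<in> ?V" using F by auto
    from 2 obtain w where "w \<in> V" "sum h F - s = - w" by blast
    then have "- (sum h F - s) \<in> V" by simp
    then have "(sum h (F \<union> E) - s) + - (sum h F - s) \<in> W" using 1 V by blast
    moreover have "sum h (F \<union> E) = sum h F + sum h E"
      using E F by (intro sum.union_disjoint) auto
    ultimately show "sum h E \<in> W" by (simp add: algebra_simps)
  qed
  then show ?thesis using F by blast
qed




lemma uniform_tail:
  fixes A :: "'a::topological_ab_group_add set"
  assumes as: "abs_summable A" and W: "open W" "0 \<in> W"
  shows "\<exists>F. finite F \<and> F \<subseteq> A \<and>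
    (\<forall>E h. finite E \<and> E \<subseteq> A - F \<and> (\<forall>a\<in>E. h a \<in> cyc a) \<longrightarrow> sum h E \<in> W)"
proof (rule ccontr)
  assume neg: "\<not> ?thesis"
  have "\<forall>F. \<exists>p. finite F \<and> F \<subseteq> A \<longrightarrow> (finite (fst p) \<and> fst p \<subseteq> A - F \<and>
      (\<forall>a\<in>fst p. snd p a \<in> cyc a) \<and> sum (snd p) (fst p) \<notin> W)"
  proof
    fix F
    show "\<exists>p. finite F \<and> F \<subseteq> A \<longrightarrow> (finite (fst p) \<and> fst p \<subseteq> A - F \<and>
      (\<forall>a\<in>fst p. snd p a \<in> cyc a) \<and> sum (snd p) (fst p) \<notin> W)"
    proof (cases "finite F \<and> F \<subseteq> A")
      case True
      have "\<exists>E h. finite E \<and> E \<subseteq> A - F \<and> (\<forall>a\<in>E. h a \<in> cyc a) \<and> sum h E \<notin> W"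
      proof (rule ccontr)
        assume nn: "\<not> (\<exists>E h. finite E \<and> E \<subseteq> A - F \<and> (\<forall>a\<in>E. h a \<in> cyc a) \<and> sum h E \<notin> W)"
        have "\<forall>E h. finite E \<and> E \<subseteq> A - F \<and> (\<forall>a\<in>E. h a \<in> cyc a) \<longrightarrow> sum h E \<in> W"
          using nn by blast
        then show False using neg True by blast
      qed
      then obtain E h where "finite E \<and> E \<subseteq> A - F \<and> (\<forall>a\<in>E. h a \<in> cyc a) \<and> sum h E \<notin> W"
        by blast
      then show ?thesis by (intro exI[of _ "(E, h)"]) simp
    next
      case False
      then show ?thesis by blast
    qed
  qed
  then obtain P where P0: "\<forall>F. finite F \<and> F \<subseteq> A \<longrightarrow> finite (fst (P F)) \<and> fst (P F) \<subseteq> A - F \<and>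
      (\<forall>a\<in>fst (P F). snd (P F) a \<in> cyc a) \<and> sum (snd (P F)) (fst (P F)) \<notin> W"
    by (rule choice[THEN exE])
  have P: "\<And>F. finite F \<and> F \<subseteq> A \<Longrightarrow> finite (fst (P F)) \<and> fst (P F) \<subseteq> A - F \<and>
      (\<forall>a\<in>fst (P F). snd (P F) a \<in> cyc a) \<and> sum (snd (P F)) (fst (P F)) \<notin> W"
    using P0 by blast
  define FF where "FF = rec_nat {} (\<lambda>_ X. X \<union> fst (P X))"
  have FF0: "FF 0 = {}" and FFS: "\<And>n. FF (Suc n) = FF n \<union> fst (P (FF n))"
    unfolding FF_def by simp_all
  define E where "E n = fst (P (FF n))" for n
  define H where "H n = snd (P (FF n))" for n
  have FFA: "finite (FF n) \<and> FF n \<subseteq> A" for n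
  proof (induction n)
    case 0 then show ?case by (simp add: FF0)
  next
    case (Suc n)
    then show ?case using P[OF Suc] by (auto simp: FFS)
  qed
  have EP: "finite (E n) \<and> E n \<subseteq> A - FF n \<and> (\<forall>a\<in>E n. H n a \<in> cyc a) \<and> sum (H n) (E n) \<notin> W" for n
    unfolding E_def H_def using P[OF FFA] by blast
  have mono: "FF m \<subseteq> FF n" if "m \<le> n" for m n
    using that
  proof (induction n)
    case 0 then show ?case by simp
  next
    case (Suc n)
    then show ?case by (cases "m = Suc n") (auto simp: FFS)
  qed
  have disj1: "E m \<inter> E n = {}" if "m < n" for m n
  proof -
    have "E m \<subseteq> FF (Suc m)" by (simp add: FFS E_def)
    also have "\<dots> \<subseteq> FF n" using mono that by simp
    finally show ?thesis using EP[of n] by blast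
  qed
  have disj: "E m \<inter> E n = {}" if "m \<noteq> n" for m n
  proof (cases "m < n")
    case True then show ?thesis using disj1 by blast
  next
    case False
    then have "n < m" using that by simp
    then show ?thesis using disj1[of n m] by blast
  qed
  define k where "k a = (if \<exists>n. a \<in> E n then H (THE n. a \<in> E n) a else 0)" for a
  have kE: "k a = H n a" if "a \<in> E n" for a n
  proof -
    have "(THE n. a \<in> E n) = n"
      by (rule the1_equality) (use that disj in blast)+
    then show ?thesis unfolding k_def using that by auto
  qed
  have kc: "\<forall>a\<in>A. k a \<in> cyc a"
  proof
    fix a assume "a \<in> A"
    show "k a \<in> cyc a"
    proof (cases "\<exists>n. a \<in> E n")
      case True
      then obtain n where "a \<in> E n" by blast
      then show ?thesis using kE EP by auto
    next
      case False
      then show ?thesis unfolding k_def by (simp add: zero_cyc)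
    qed
  qed
  obtain F0 where F0: "finite F0" "F0 \<subseteq> A" "\<forall>E. finite E \<and> E \<subseteq> A - F0 \<longrightarrow> sum k E \<in> W"
    using cauchy_tail[OF abs_summable_summable[OF as kc] W] by blast
  define S where "S = {n. E n \<inter> F0 \<noteq> {}}"
  define f where "f n = (SOME a. a \<in> E n \<inter> F0)" for n
  have fS: "f n \<in> E n \<inter> F0" if "n \<in> S" for n
  proof -
    have "\<exists>a. a \<in> E n \<inter> F0" using that unfolding S_def by blast
    then show ?thesis unfolding f_def by (rule someI_ex)
  qed
  have inj: "inj_on f S"
  proof (rule inj_onI)
    fix m n assume mn: "m \<in> S" "n \<in> S" "f m = f n"
    show "m = n"
    proof (rule ccontr)
      assume "m \<noteq> n"
      then have "E m \<inter> E n = {}" by (rule disj)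
      moreover have "f m \<in> E m" "f n \<in> E n" using fS[OF mn(1)] fS[OF mn(2)] by auto
      ultimately show False using mn(3) by auto
    qed
  qed
  have "f ` S \<subseteq> F0" using fS by blast
  then have "finite (f ` S)" using F0(1) by (rule finite_subset)
  then have "finite S" using inj by (rule finite_imageD)
  then have "S \<noteq> UNIV" using infinite_UNIV_nat by auto
  then obtain n where "n \<notin> S" by auto
  then have "E n \<subseteq> A - F0" using EP[of n] unfolding S_def by blast
  then have "sum k (E n) \<in> W" using F0(3) EP[of n] by blast
  moreover have "sum k (E n) = sum (H n) (E n)" using kE by (intro sum.cong) auto
  ultimately show False using EP[of n] by simp
qed




lemma topPA: "topspace (PA A) = (\<Pi>\<^sub>E a\<in>A. cyc a)"
  unfolding PA_def by simp

lemma proj_tendsto: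
  assumes "a \<in> A"
  shows "((\<lambda>h. h a) \<longlongrightarrow> h0 a) (atin (PA A) h0)"
proof (cases "h0 \<in> topspace (PA A)")
  case True
  have "continuous_map (PA A) (subtopology euclidean (cyc a)) (\<lambda>h. h a)"
    unfolding PA_def using assms by (rule continuous_map_product_projection)
  then have "continuous_map (PA A) euclidean (\<lambda>h. h a)"
    by (rule continuous_map_into_fulltopology)
  then show ?thesis using True unfolding continuous_map_atin by auto
next
  case False
  then have "atin (PA A) h0 = bot" by (simp add: atin_def)
  then show ?thesis by simp
qed

lemma tail_closure:
  fixes A :: "'a::{topological_ab_group_add,t2_space} set"
  assumes as: "abs_summable A" and h: "h \<in> topspace (PA A)"
    and F: "finite F" "F \<subseteq> A"
    and unif: "\<forall>E h. finite E \<and> E \<subseteq> A - F \<and> (\<forall>a\<in>E. h a \<in> cyc a) \<longrightarrow> sum h E \<in> W"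
  shows "infsum h A - sum h F \<in> closure W"
proof -
  have hc: "\<forall>a\<in>A. h a \<in> cyc a" using h by (auto simp: topPA PiE_def Pi_def)
  have s: "(h has_sum infsum h A) A" using abs_summable_summable[OF as hc] by simp
  have "(h has_sum (infsum h A - sum h F)) (A - F)"
    by (rule has_sum_Diff[OF s has_sum_finite[OF F(1)] F(2)])
  then have t: "(sum h \<longlongrightarrow> infsum h A - sum h F) (finite_subsets_at_top (A - F))"
    unfolding has_sum_def .
  have ev: "eventually (\<lambda>E. sum h E \<in> closure W) (finite_subsets_at_top (A - F))"
  proof (rule eventually_finite_subsets_at_top_weakI)
    fix X assume "finite X" "X \<subseteq> A - F"
    then have "sum h X \<in> W" using unif hc by blast
    then show "sum h X \<in> closure W" using closure_subset by blast
  qed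
  show ?thesis by (rule Lim_in_closed_set[OF closed_closure ev _ t]) simp
qed

lemma sigma_cont:
  fixes A :: "'a::{topological_ab_group_add,t2_space} set"
  assumes as: "abs_summable A"
  shows "continuous_map (PA A) euclidean (\<lambda>h. infsum h A)"
  unfolding continuous_map_atin limitin_canonical_iff
proof
  fix h0 assume h0: "h0 \<in> topspace (PA A)"
  have "((\<lambda>h. infsum h A - infsum h0 A) \<longlongrightarrow> 0) (atin (PA A) h0)"
  proof (rule topological_tendstoI)
    fix U :: "'a set" assume U: "open U" "0 \<in> U"
    obtain D where D: "open D" "0 \<in> D" "\<forall>x\<in>D. \<forall>y\<in>D. \<forall>z\<in>D. x + y + - z \<in> U"
      using nbhd3[OF U] by blast
    obtain W where W: "open W" "0 \<in> W" "closure W \<subseteq> D"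
      using closure_nbhd[OF D(1,2)] by blast
    obtain F where F: "finite F" "F \<subseteq> A"
      "\<forall>E h. finite E \<and> E \<subseteq> A - F \<and> (\<forall>a\<in>E. h a \<in> cyc a) \<longrightarrow> sum h E \<in> W"
      using uniform_tail[OF as W(1,2)] by blast
    have "((\<lambda>h. sum h F) \<longlongrightarrow> sum h0 F) (atin (PA A) h0)"
      by (rule tendsto_sum) (use proj_tendsto F(2) in blast)
    then have "((\<lambda>h. sum h F - sum h0 F) \<longlongrightarrow> sum h0 F - sum h0 F) (atin (PA A) h0)"
      by (rule tendsto_diff[OF _ tendsto_const])
    then have t0: "((\<lambda>h. sum h F - sum h0 F) \<longlongrightarrow> 0) (atin (PA A) h0)" by simp
    have e1: "eventually (\<lambda>h. sum h F - sum h0 F \<in> D) (atin (PA A) h0)"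
      by (rule topological_tendstoD[OF t0 D(1,2)])
    have e2: "eventually (\<lambda>h. h \<in> topspace (PA A)) (atin (PA A) h0)"
      unfolding eventually_atin by (intro disjI2 exI[of _ "topspace (PA A)"]) (use h0 in auto)
    have c0: "infsum h0 A - sum h0 F \<in> D"
      using tail_closure[OF as h0 F] W(3) by blast
    show "eventually (\<lambda>h. infsum h A - infsum h0 A \<in> U) (atin (PA A) h0)"
      using e1 e2
    proof eventually_elim
      case (elim h)
      have c: "infsum h A - sum h F \<in> D"
        using tail_closure[OF as elim(2) F] W(3) by blast
      have "(sum h F - sum h0 F) + (infsum h A - sum h F) + - (infsum h0 A - sum h0 F) \<in> U"
        using D(3) elim(1) c c0 by blast
      moreover have "(sum h F - sum h0 F) + (infsum h A - sum h F) + - (infsum h0 A - sum h0 F)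
          = infsum h A - infsum h0 A" by (simp add: algebra_simps)
      ultimately show ?case by simp
    qed
  qed
  then have "((\<lambda>h. (infsum h A - infsum h0 A) + infsum h0 A) \<longlongrightarrow> 0 + infsum h0 A) (atin (PA A) h0)"
    by (rule tendsto_add[OF _ tendsto_const])
  then show "((\<lambda>h. infsum h A) \<longlongrightarrow> infsum h0 A) (atin (PA A) h0)" by simp
qed




lemma kalton_has_sum:
  fixes A :: "'a::{topological_ab_group_add,t2_space} set"
  assumes "h \<in> SA A"
  shows "(h has_sum kalton A h) A"
proof -
  let ?S = "{a \<in> A. h a \<noteq> 0}"
  have fin: "finite ?S" using assms unfolding SA_def by blast
  have "(h has_sum sum h ?S) ?S" using has_sum_finite[OF fin] .
  moreover have "(h has_sum sum h ?S) ?S \<longleftrightarrow> (h has_sum sum h ?S) A"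
    by (rule has_sum_cong_neutral) auto
  ultimately show ?thesis unfolding kalton_def by simp
qed

lemma kalton_coord:
  assumes "a \<in> A"
  shows "kalton A (coord A a x) = x"
proof (cases "x = 0")
  case True
  then have "{b \<in> A. coord A a x b \<noteq> 0} = {}" unfolding coord_def by auto
  then show ?thesis using True unfolding kalton_def by simp
next
  case False
  then have "{b \<in> A. coord A a x b \<noteq> 0} = {a}" using assms unfolding coord_def by auto
  then show ?thesis unfolding kalton_def by (simp add: coord_def assms)
qed

definition rE :: "'a::ab_group_add set \<Rightarrow> ('a \<Rightarrow> 'a) \<Rightarrow> 'a set \<Rightarrow> ('a \<Rightarrow> 'a)" where
  "rE A h E = (\<lambda>b. if b \<in> A then (if b \<in> E then h b else 0) else undefined)"

lemma rE_top:
  assumes "h \<in> topspace (PA A)"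
  shows "rE A h E \<in> topspace (PA A)"
  using assms zero_cyc unfolding topPA rE_def by (auto simp: PiE_def Pi_def extensional_def)

lemma rE_SA:
  assumes "h \<in> topspace (PA A)" "finite E"
  shows "rE A h E \<in> SA A"
proof -
  have "{a \<in> A. rE A h E a \<noteq> 0} \<subseteq> E" unfolding rE_def by auto
  then have "finite {a \<in> A. rE A h E a \<noteq> 0}" using assms(2) finite_subset by blast
  then show ?thesis unfolding SA_def using rE_top[OF assms(1)] by blast
qed

lemma kalton_rE:
  assumes "finite E" "E \<subseteq> A"
  shows "kalton A (rE A h E) = sum h E"
proof -
  have e: "{a \<in> A. rE A h E a \<noteq> 0} = {a \<in> E. h a \<noteq> 0}" using assms(2) unfolding rE_def by auto
  have "sum (rE A h E) {a \<in> E. h a \<noteq> 0} = sum h {a \<in> E. h a \<noteq> 0}"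
    by (rule sum.cong) (use assms(2) in \<open>auto simp: rE_def\<close>)
  also have "\<dots> = sum h E" by (rule sum.mono_neutral_left) (use assms in auto)
  finally show ?thesis unfolding kalton_def e .
qed

lemma rE_limit:
  assumes h: "h \<in> topspace (PA A)"
  shows "limitin (PA A) (rE A h) h (finite_subsets_at_top A)"
  unfolding PA_def limitin_componentwise
proof (intro conjI ballI)
  show "h \<in> extensional A" using h unfolding topPA by (simp add: PiE_def)
  show "eventually (\<lambda>E. rE A h E \<in> topspace (product_topology (\<lambda>a. subtopology euclidean (cyc a)) A))
     (finite_subsets_at_top A)"
    using rE_top[OF h] unfolding PA_def by simp
  fix i assume i: "i \<in> A"
  have hi: "h i \<in> cyc i" using h i unfolding topPA by auto
  have ev: "eventually (\<lambda>E. i \<in> E) (finite_subsets_at_top A)"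
    unfolding eventually_finite_subsets_at_top using i by (intro exI[of _ "{i}"]) auto
  have "eventually (\<lambda>E. h i = rE A h E i) (finite_subsets_at_top A)"
    using ev by eventually_elim (use i in \<open>simp add: rE_def\<close>)
  then have "((\<lambda>E. rE A h E i) \<longlongrightarrow> h i) (finite_subsets_at_top A)"
    by (rule tendsto_cong[THEN iffD1, OF _ tendsto_const])
  moreover have "eventually (\<lambda>E. rE A h E i \<in> cyc i) (finite_subsets_at_top A)"
    using rE_top[OF h] i unfolding topPA by auto
  ultimately show "limitin (subtopology euclidean (cyc i)) (\<lambda>c. rE A h c i) (h i) (finite_subsets_at_top A)"
    unfolding limitin_subtopology using hi by simp
qed

lemma ext_limit:
  fixes A :: "'a::{topological_ab_group_add,t2_space} set"
  assumes g: "kalton_ext A j g" and h: "h \<in> topspace (PA A)"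
  shows "((\<lambda>E. j (sum h E)) \<longlongrightarrow> g h) (finite_subsets_at_top A)"
proof -
  have gc: "continuous_map (PA A) euclidean g" using g unfolding kalton_ext_def by blast
  have "limitin euclidean (g \<circ> rE A h) (g h) (finite_subsets_at_top A)"
    by (rule continuous_map_limit[OF gc rE_limit[OF h]])
  then have t: "((\<lambda>E. g (rE A h E)) \<longlongrightarrow> g h) (finite_subsets_at_top A)" by (simp add: o_def)
  have "eventually (\<lambda>E. g (rE A h E) = j (sum h E)) (finite_subsets_at_top A)"
  proof (rule eventually_finite_subsets_at_top_weakI)
    fix X assume X: "finite X" "X \<subseteq> A"
    have "g (rE A h X) = j (kalton A (rE A h X))" using g rE_SA[OF h X(1)] unfolding kalton_ext_def by blast
    then show "g (rE A h X) = j (sum h X)" using kalton_rE[OF X] by simp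
  qed
  then show ?thesis using t by (rule tendsto_cong[THEN iffD1])
qed




theorem proposition7p1:
  fixes A :: "'g::{topological_ab_group_add,t2_space} set"
    and j :: "'g \<Rightarrow> 'h::{topological_ab_group_add,t2_space}"
  assumes "0 \<notin> A"
    and "is_completion j"
  shows "(abs_summable A \<longleftrightarrow>
            (continuous_map (subtopology (PA A) (SA A)) euclidean (kalton A) \<and>
             (\<exists>g. kalton_ext A j g \<and> g ` topspace (PA A) \<subseteq> range j)))
       \<and> (abs_summable A \<longrightarrow>
            (\<forall>g. kalton_ext A j g \<longrightarrow>
               (\<forall>h \<in> topspace (PA A). \<exists>s.
                  ((\<lambda>a. kalton A (coord A a (h a))) has_sum s) A \<and> g h = j s)))"
proof -
  have hm: "homeomorphic_map euclidean (subtopology euclidean (range j)) j"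
    using assms(2) unfolding is_completion_def by blast
  then obtain j' where jj: "homeomorphic_maps euclidean (subtopology euclidean (range j)) j j'"
    unfolding homeomorphic_map_maps by blast
  have jc0: "continuous_map euclidean (subtopology euclidean (range j)) j"
    and j'c: "continuous_map (subtopology euclidean (range j)) euclidean j'"
    and jinv: "\<And>x. j' (j x) = x"
    using jj unfolding homeomorphic_maps_def by auto
  have jc: "continuous_map euclidean euclidean j"
    using jc0 by (rule continuous_map_into_fulltopology)
  have fwd: "continuous_map (subtopology (PA A) (SA A)) euclidean (kalton A) \<and>
             (\<exists>g. kalton_ext A j g \<and> g ` topspace (PA A) \<subseteq> range j)" if as: "abs_summable A"
  proof
    have sc: "continuous_map (PA A) euclidean (\<lambda>h. infsum h A)" by (rule sigma_cont[OF as])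
    have eqK: "infsum h A = kalton A h" if "h \<in> SA A" for h
      using kalton_has_sum[OF that] by (rule infsumI)
    show "continuous_map (subtopology (PA A) (SA A)) euclidean (kalton A)"
    proof (rule continuous_map_eq[OF continuous_map_from_subtopology[OF sc]])
      fix h assume "h \<in> topspace (subtopology (PA A) (SA A))"
      then show "infsum h A = kalton A h" using eqK by simp
    qed
    have "kalton_ext A j (\<lambda>h. j (infsum h A))"
      unfolding kalton_ext_def
    proof
      show "continuous_map (PA A) euclidean (\<lambda>h. j (infsum h A))"
        using continuous_map_compose[OF sc jc] by (simp add: o_def)
      show "\<forall>h\<in>SA A. j (infsum h A) = j (kalton A h)" using eqK by simp
    qed
    then show "\<exists>g. kalton_ext A j g \<and> g ` topspace (PA A) \<subseteq> range j" by blast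
  qed
  have bwd: "abs_summable A" if ex: "\<exists>g. kalton_ext A j g \<and> g ` topspace (PA A) \<subseteq> range j"
    unfolding abs_summable_def
  proof
    fix z :: "'g \<Rightarrow> int"
    obtain g where g: "kalton_ext A j g" "g ` topspace (PA A) \<subseteq> range j" using ex by blast
    define h where "h = (\<lambda>a. if a \<in> A then zsmult (z a) a else undefined)"
    have hT: "h \<in> topspace (PA A)" unfolding topPA h_def cyc_def by (auto simp: PiE_def extensional_def)
    obtain s where s: "g h = j s" using g(2) hT by blast
    have t: "((\<lambda>E. j (sum h E)) \<longlongrightarrow> j s) (finite_subsets_at_top A)"
      using ext_limit[OF g(1) hT] s by simp
    have "limitin (subtopology euclidean (range j)) (\<lambda>E. j (sum h E)) (j s) (finite_subsets_at_top A)"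
      unfolding limitin_subtopology using t by simp
    then have "limitin euclidean (j' \<circ> (\<lambda>E. j (sum h E))) (j' (j s)) (finite_subsets_at_top A)"
      by (rule continuous_map_limit[OF j'c])
    then have "(sum h \<longlongrightarrow> s) (finite_subsets_at_top A)" by (simp add: o_def jinv)
    then have "(h has_sum s) A" unfolding has_sum_def .
    then have "((\<lambda>a. zsmult (z a) a) has_sum s) A"
      by (rule has_sum_cong[THEN iffD1, rotated]) (simp add: h_def)
    then show "\<exists>g. ((\<lambda>a. zsmult (z a) a) has_sum g) A" by blast
  qed
  have further: "\<exists>s. ((\<lambda>a. kalton A (coord A a (h a))) has_sum s) A \<and> g h = j s"
    if as: "abs_summable A" and g: "kalton_ext A j g" and hT: "h \<in> topspace (PA A)" for g h
  proof -
    have hc: "\<forall>a\<in>A. h a \<in> cyc a" using hT unfolding topPA by auto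
    define s where "s = infsum h A"
    have hs: "(h has_sum s) A" unfolding s_def using abs_summable_summable[OF as hc] by simp
    then have t1: "(sum h \<longlongrightarrow> s) (finite_subsets_at_top A)" unfolding has_sum_def .
    have "limitin euclidean (j \<circ> sum h) (j s) (finite_subsets_at_top A)"
      by (rule continuous_map_limit[OF jc]) (use t1 in simp)
    then have t2: "((\<lambda>E. j (sum h E)) \<longlongrightarrow> j s) (finite_subsets_at_top A)" by (simp add: o_def)
    have "g h = j s"
      using tendsto_unique[OF finite_subsets_at_top_neq_bot ext_limit[OF g hT] t2] .
    moreover have "((\<lambda>a. kalton A (coord A a (h a))) has_sum s) A"
      using hs by (rule has_sum_cong[THEN iffD2, rotated]) (simp add: kalton_coord)
    ultimately show ?thesis by blast
  qed
  show ?thesis using fwd bwd further by blast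
qed


end
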